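(* Let $f_0=1,f_1=1,f_2=2,\dots$ be the Fibonacci numbers, let $L$ be a positive integer, and set $p=f_L$, $q=f_{L+1}$. There are absolute constants $c_1,c_2>0$ such that for all integers $v\neq v'$ with $v,v'\in(-c_2q,c_2q)$ we have $\rho_q(pv,pv')>\frac{c_1q}{\max\{|v|,|v'|\}}$. Furthermore, for any $i\in[q]$ and any $t\le L$, there is $v\in\{-f_t,\dots,f_t\}$ such that $\rho_q(i,pv)\le\frac{3q}{f_t}$.
   Context: $\rho_q$ is the Lee metric on $\mathbb{Z}_q$: $\rho_q(a,b)$ is the minimum of $|j|$ over all integers $j$ with $a\equiv b+j\pmod q$. *)

theory Defs
  imports Complex_Main "HOL-Number_Theory.Number_Theory"
begin

text \<open>Fibonacci numbers with the paper's indexing f_0 = 1, f_1 = 1, f_2 = 2, ...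
  In terms of the library's fib (fib 0 = 0, fib 1 = 1): f n = fib (n+1).\<close>
definition fibo :: "nat \<Rightarrow> nat" where
  "fibo n = fib (Suc n)"

definition lee :: "int \<Rightarrow> int \<Rightarrow> int \<Rightarrow> nat" where
  "lee q a b = (LEAST n::nat. \<exists>j::int. \<bar>j\<bar> = int n \<and> [a = b + j] (mod q))"

end

theory Submission imports Defs begin

lemma noN: "(d::int)^2 - d*k - k^2 = 0 \<Longrightarrow> d = 0"
proof (induction "nat \<bar>d\<bar>" arbitrary: d k rule: less_induct)
  case less
  have e: "even (d^2 - d*k - k^2)" using less.prems by simp
  have ed: "even d"
  proof (rule ccontr)
    assume "odd d"
    then show False using e by (cases "even k") (auto simp: even_mult_iff)
  qed
  have ek: "even k" using e ed by (auto simp: even_mult_iff)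
  obtain d' k' where dk: "d = 2*d'" "k = 2*k'" using ed ek by (auto elim!: evenE)
  have "4*(d'^2 - d'*k' - k'^2) = 0" using less.prems unfolding dk by (simp add: algebra_simps power2_eq_square)
  hence z: "d'^2 - d'*k' - k'^2 = 0" by simp
  show ?case
  proof (cases "d = 0")
    case False
    hence lt: "nat \<bar>d'\<bar> < nat \<bar>d\<bar>" using dk(1) by arith
    have "d' = 0" by (rule less.hyps[OF lt z])
    then show ?thesis using dk(1) by simp
  qed
qed

lemma lee_ex: "\<exists>j::int. \<bar>j\<bar> = int (lee q a b) \<and> [a = b + j] (mod q)"
proof -
  have "\<exists>n::nat. \<exists>j::int. \<bar>j\<bar> = int n \<and> [a = b + j] (mod q)"
    by (rule exI[of _ "nat \<bar>a-b\<bar>"], rule exI[of _ "a-b"]) auto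
  then show ?thesis unfolding lee_def by (rule LeastI_ex)
qed

lemma lee_le: "[a = b + j] (mod q) \<Longrightarrow> lee q a b \<le> nat \<bar>j\<bar>"
  unfolding lee_def by (rule Least_le) auto

lemma round_lattice:
  fixes A1 A2 B1 B2 i :: int
  assumes "A1*B2 - A2*B1 \<noteq> 0"
  shows "\<exists>X Y::int. \<bar>real_of_int (X*A1 + Y*B1)\<bar> \<le> (\<bar>A1\<bar>+\<bar>B1\<bar>)/2 \<and>
     \<bar>real_of_int (X*A2+Y*B2 - i)\<bar> \<le> (\<bar>A2\<bar>+\<bar>B2\<bar>)/2"
proof -
  define D where "D = real_of_int (A1*B2 - A2*B1)"
  have D: "D \<noteq> 0" unfolding D_def using assms by (metis of_int_eq_0_iff)
  define x where "x = - i * B1 / D"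
  define y where "y = i * A1 / D"
  define X where "X = round x"
  define Y where "Y = round y"
  have hx: "\<bar>X - x\<bar> \<le> 1/2" unfolding X_def by (rule of_int_round_abs_le)
  have hy: "\<bar>Y - y\<bar> \<le> 1/2" unfolding Y_def by (rule of_int_round_abs_le)
  have e1: "x * A1 + y * B1 = 0" using D unfolding x_def y_def by (simp add: field_simps)
  have Deq: "D = real_of_int A1 * real_of_int B2 - real_of_int A2 * real_of_int B1" unfolding D_def by simp
  have "x * A2 + y * B2 = i * (real_of_int A1 * real_of_int B2 - real_of_int A2 * real_of_int B1) / D"
    using D unfolding x_def y_def by (simp add: field_simps)
  hence e2: "x * A2 + y * B2 = i" using D Deq by simp
  have r1: "real_of_int (X*A1 + Y*B1) = (X - x)*A1 + (Y-y)*B1" using e1 by (simp add: algebra_simps)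
  have r2: "real_of_int (X*A2 + Y*B2 - i) = (X - x)*A2 + (Y-y)*B2" using e2 by (simp add: algebra_simps)
  have b1: "\<bar>(X - x)*A1 + (Y-y)*B1\<bar> \<le> (\<bar>real_of_int A1\<bar>+\<bar>real_of_int B1\<bar>)/2"
  proof -
    have t1: "\<bar>(X - x)*A1\<bar> \<le> \<bar>real_of_int A1\<bar>/2" using mult_right_mono[OF hx, of "\<bar>real_of_int A1\<bar>"] by (simp add: abs_mult)
    have t2: "\<bar>(Y - y)*B1\<bar> \<le> \<bar>real_of_int B1\<bar>/2" using mult_right_mono[OF hy, of "\<bar>real_of_int B1\<bar>"] by (simp add: abs_mult)
    have "\<bar>(X - x)*A1 + (Y-y)*B1\<bar> \<le> \<bar>real_of_int A1\<bar>/2 + \<bar>real_of_int B1\<bar>/2"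
      by (rule order_trans[OF abs_triangle_ineq add_mono[OF t1 t2]])
    then show ?thesis by (simp add: add_divide_distrib)
  qed
  have b2: "\<bar>(X - x)*A2 + (Y-y)*B2\<bar> \<le> (\<bar>real_of_int A2\<bar>+\<bar>real_of_int B2\<bar>)/2"
  proof -
    have t1: "\<bar>(X - x)*A2\<bar> \<le> \<bar>real_of_int A2\<bar>/2" using mult_right_mono[OF hx, of "\<bar>real_of_int A2\<bar>"] by (simp add: abs_mult)
    have t2: "\<bar>(Y - y)*B2\<bar> \<le> \<bar>real_of_int B2\<bar>/2" using mult_right_mono[OF hy, of "\<bar>real_of_int B2\<bar>"] by (simp add: abs_mult)
    have "\<bar>(X - x)*A2 + (Y-y)*B2\<bar> \<le> \<bar>real_of_int A2\<bar>/2 + \<bar>real_of_int B2\<bar>/2"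
      by (rule order_trans[OF abs_triangle_ineq add_mono[OF t1 t2]])
    then show ?thesis by (simp add: add_divide_distrib)
  qed
  have c1: "\<bar>real_of_int (X*A1 + Y*B1)\<bar> \<le> (\<bar>A1\<bar>+\<bar>B1\<bar>)/2" unfolding r1 using b1 by simp
  have c2: "\<bar>real_of_int (X*A2 + Y*B2 - i)\<bar> \<le> (\<bar>A2\<bar>+\<bar>B2\<bar>)/2" unfolding r2 using b2 by simp
  show ?thesis using c1 c2 by blast
qed

lemma gfib: "k + 1 \<le> n \<Longrightarrow>
   int (fib n) * int (fib (k+1)) - int (fib (n+1)) * int (fib k) = (-1)^k * int (fib (n-k)) \<and>
   int (fib n) * int (fib (k+2)) - int (fib (n+1)) * int (fib (k+1)) = (-1)^(k+1) * int (fib (n-k-1))"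
proof (induction k)
  case 0
  then show ?case using fib_plus_2[of "n-1"] by (cases n) (auto simp: algebra_simps)
next
  case (Suc k)
  then have IH: "int (fib n) * int (fib (k+1)) - int (fib (n+1)) * int (fib k) = (-1)^k * int (fib (n-k))"
     "int (fib n) * int (fib (k+2)) - int (fib (n+1)) * int (fib (k+1)) = (-1)^(k+1) * int (fib (n-k-1))" by auto
  have f1: "fib (k+3) = fib (k+2) + fib (k+1)" by (simp add: eval_nat_numeral)
  define m where "m = n - k - 2"
  have m1: "n - k = m + 2" "n - k - 1 = m + 1" using Suc.prems m_def by simp_all
  have f2: "fib (n-k) = fib (n-k-1) + fib (n-k-2)" using m1(1) by (simp add: numeral_2_eq_2)
  show ?case using IH f1 f2 by (auto simp: algebra_simps)
qed

lemma abs3: "\<bar>a + b - c::int\<bar> \<le> \<bar>a\<bar> + \<bar>b\<bar> + \<bar>c\<bar>" by arith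

lemma cass: "int (fib (L+2))^2 - int (fib (L+2)) * int (fib (L+1)) - int (fib (L+1))^2 = - ((-1)^L)"
proof -
  have c: "int (fib (Suc (Suc L)) * fib L) - int ((fib (Suc L))\<^sup>2) = - ((-1)^L)" by (rule fib_Cassini_int)
  have f: "fib (L+2) = fib (L+1) + fib L" by (simp add: eval_nat_numeral)
  show ?thesis using c f by (simp add: algebra_simps power2_eq_square)
qed

lemma part1:
  fixes L :: nat and v v' :: int
  assumes "v \<noteq> v'" "\<bar>real_of_int v\<bar> < 1/4 * real (fibo (L+1))"
     "\<bar>real_of_int v'\<bar> < 1/4 * real (fibo (L+1))"
  shows "real (lee (int (fibo (L+1))) (int (fibo L) * v) (int (fibo L) * v'))
            > 1/12 * real (fibo (L+1)) / real_of_int (max \<bar>v\<bar> \<bar>v'\<bar>)"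
proof -
  define p where "p = int (fib (L+1))"
  define q where "q = int (fib (L+2))"
  have pq: "int (fibo L) = p" "int (fibo (L+1)) = q" unfolding p_def q_def fibo_def by simp_all
  have q0: "q > 0" unfolding q_def using fib_neq_0_nat[of "L+2"] by linarith
  have pleq: "p \<le> q" "0 \<le> p" unfolding p_def q_def using fib_mono[of "L+1" "L+2"] by simp_all
  have C: "\<bar>q^2 - q*p - p^2\<bar> = 1" using cass[of L] unfolding p_def q_def by simp
  obtain j where j: "\<bar>j\<bar> = int (lee q (p*v) (p*v'))" "[p*v = p*v' + j] (mod q)"
    using lee_ex by blast
  define d where "d = v - v'"
  have d0: "d \<noteq> 0" using assms(1) d_def by simp
  from j(2) have "q dvd (p*v - (p*v' + j))" by (simp add: cong_iff_dvd_diff)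
  then obtain k where k: "p*v - (p*v' + j) = q*k" by (auto elim!: dvdE)
  have jk: "j = p*d - q*k" using k unfolding d_def right_diff_distrib by linarith
  define N where "N = d^2 - d*k - k^2"
  have N0: "N \<noteq> 0" using noN[of d k] d0 N_def by auto
  have iden: "q^2 * N = (q^2 - q*p - p^2) * d^2 + d*j*(q+2*p) - j^2"
    unfolding N_def jk by (simp add: algebra_simps power2_eq_square)
  have "q^2 \<le> \<bar>q^2 * N\<bar>" using N0 q0 mult_left_mono[of 1 "\<bar>N\<bar>" "q*q"] by (simp add: abs_mult power2_eq_square)
  also have "\<dots> \<le> \<bar>(q^2 - q*p - p^2) * d^2\<bar> + \<bar>d*j*(q+2*p)\<bar> + \<bar>j^2\<bar>"
    unfolding iden by (rule abs3)
  also have "\<dots> = d^2 + \<bar>d\<bar>*\<bar>j\<bar>*(q+2*p) + j^2"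
    using C pleq by (simp add: abs_mult)
  also have "\<dots> \<le> d^2 + \<bar>d\<bar>*\<bar>j\<bar>*(3*q) + j^2"
    using pleq by (simp add: mult_left_mono)
  finally have main: "q^2 \<le> d^2 + 3*q*(\<bar>d\<bar>*\<bar>j\<bar>) + j^2" by (simp add: algebra_simps)
  have v4: "4*\<bar>v\<bar> < q" "4*\<bar>v'\<bar> < q" using assms(2,3) pq by linarith+
  define M where "M = max \<bar>v\<bar> \<bar>v'\<bar>"
  have Mv: "\<bar>v\<bar> \<le> M" "\<bar>v'\<bar> \<le> M" unfolding M_def by simp_all
  have M1: "M \<ge> 1"
  proof (cases "v = 0")
    case True
    then have "v' \<noteq> 0" using assms(1) by simp
    then show ?thesis using Mv(2) by linarith
  next
    case False
    then show ?thesis using Mv(1) by linarith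
  qed
  have dt: "\<bar>d\<bar> \<le> \<bar>v\<bar> + \<bar>v'\<bar>" unfolding d_def by (rule abs_triangle_ineq4)
  have dM1: "\<bar>d\<bar> \<le> 2*M" using dt Mv by linarith
  have dM2: "2*\<bar>d\<bar> < q" using dt v4 by linarith
  note dM = dM1 dM2
  have key: "q < 12*M*\<bar>j\<bar>"
  proof (cases "q \<le> 2*\<bar>j\<bar>")
    case True
    have "1 * \<bar>j\<bar> \<le> M * \<bar>j\<bar>" using M1 by (rule mult_right_mono) simp
    then show ?thesis using True q0 by linarith
  next
    case False
    have "(2*\<bar>j\<bar>)^2 < q^2" by (rule power_strict_mono) (use False in auto)
    moreover have "(2*\<bar>d\<bar>)^2 < q^2" by (rule power_strict_mono) (use dM2 in auto)
    ultimately have "q*q < 6*q*(\<bar>d\<bar>*\<bar>j\<bar>)" using main by (simp add: power2_eq_square algebra_simps)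
    hence "q < 6*(\<bar>d\<bar>*\<bar>j\<bar>)" using q0 by simp
    moreover have "\<bar>d\<bar>*\<bar>j\<bar> \<le> 2*M*\<bar>j\<bar>" using dM by (simp add: mult_right_mono)
    ultimately show ?thesis by linarith
  qed
  have Mr: "real_of_int M > 0" using M1 by simp
  have "real_of_int q < 12 * real_of_int M * real_of_int \<bar>j\<bar>" using key by (metis of_int_less_iff of_int_mult of_int_numeral)
  hence "1/12 * real_of_int q / real_of_int M < real_of_int \<bar>j\<bar>" using Mr by (simp add: field_simps)
  then show ?thesis using j(1) pq M_def by (metis of_int_of_nat_eq of_nat_numeral)
qed


lemma half_le: "(w::real) \<le> (a + b)/2 \<Longrightarrow> b \<le> a \<Longrightarrow> w \<le> a" by (simp add: field_simps)

lemma fibbound: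
  assumes "k + 1 \<le> L"
  shows "fib (L+2-k) * fib (k+2) \<le> 2 * fib (L+2)"
proof -
  define a where "a = L + 1 - k"
  have a2: "a \<ge> 2" using assms a_def by simp
  have e1: "L + 2 - k = Suc a" using assms a_def by simp
  have "fib (Suc a) = fib a + fib (a - 1)" using a2
    by (metis Suc_diff_1 Suc_le_lessD fib.simps(3) add.commute less_le_trans pos2)
  moreover have "fib (a-1) \<le> fib a" by (rule fib_mono) simp
  ultimately have f1: "fib (Suc a) \<le> 2 * fib a" by simp
  have "fib (Suc (a - 1 + (k+1))) = fib (Suc (k+1)) * fib (Suc (a-1)) + fib (k+1) * fib (a-1)" by (rule fib_add)
  moreover have "Suc (a - 1 + (k+1)) = L + 2" "Suc (a-1) = a" using a2 a_def assms by auto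
  ultimately have "fib (L+2) = fib (k+2) * fib a + fib (k+1) * fib (a-1)" by simp
  hence f2: "fib a * fib (k+2) \<le> fib (L+2)" by simp
  have "fib (L+2-k) * fib (k+2) \<le> 2 * fib a * fib (k+2)" unfolding e1 using f1 by simp
  also have "\<dots> \<le> 2 * fib (L+2)" using f2 by simp
  finally show ?thesis .
qed

lemma part2:
  fixes L t :: nat and i :: int
  assumes "L \<ge> 1" "1 \<le> i" "i \<le> int (fibo (L+1))" "t \<le> L"
  shows "\<exists>v::int. v \<in> {- int (fibo t)..int (fibo t)} \<and>
          real (lee (int (fibo (L+1))) i (int (fibo L) * v))
            \<le> 3 * real (fibo (L+1)) / real (fibo t)"
proof -
  define p where "p = int (fib (L+1))"
  define q where "q = int (fib (L+2))"
  have pq: "int (fibo L) = p" "int (fibo (L+1)) = q" unfolding p_def q_def fibo_def by simp_all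
  have q0: "q > 0" unfolding q_def using fib_neq_0_nat[of "L+2"] by linarith
  show ?thesis
  proof (cases t)
    case 0
    have "[i = p*0 + i] (mod q)" by simp
    hence "lee q i (p*0) \<le> nat \<bar>i\<bar>" by (rule lee_le)
    hence "real (lee q i (p*0)) \<le> real_of_int q" using assms(2,3) pq by linarith
    moreover have "fibo t = 1" using 0 fibo_def by simp
    ultimately show ?thesis using pq q0 by (intro exI[of _ 0]) simp
  next
    case (Suc k)
    have kL: "k + 1 \<le> L + 1" "k + 1 \<le> L" using Suc assms(4) by auto
    from gfib[OF kL(1)] have G:
      "p * int (fib (k+1)) - q * int (fib k) = (-1)^k * int (fib (L+1-k))"
      "p * int (fib (k+2)) - q * int (fib (k+1)) = (-1)^(k+1) * int (fib (L-k))"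
      unfolding p_def q_def by (simp_all add: eval_nat_numeral)
    define A1 where "A1 = int (fib (k+2))"
    define B1 where "B1 = int (fib (k+1))"
    define A2 where "A2 = p * A1 - q * B1"
    define B2 where "B2 = p * B1 - q * int (fib k)"
    have cas: "int (fib (k+2)) * int (fib k) - int (fib (k+1))^2 = - ((-1)^k)"
      using fib_Cassini_int[of k] by (simp add: eval_nat_numeral)
    have "A1*B2 - A2*B1 = q * (int (fib (k+1))^2 - int (fib (k+2)) * int (fib k))"
      unfolding A1_def A2_def B1_def B2_def by (simp add: algebra_simps power2_eq_square)
    also have "\<dots> = q * (-1)^k" using cas by simp
    finally have det: "A1*B2 - A2*B1 \<noteq> 0" using q0 by simp
    obtain X Y where XY: "\<bar>real_of_int (X*A1 + Y*B1)\<bar> \<le> (\<bar>A1\<bar>+\<bar>B1\<bar>)/2"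
       "\<bar>real_of_int (X*A2 + Y*B2 - i)\<bar> \<le> (\<bar>A2\<bar>+\<bar>B2\<bar>)/2"
      using round_lattice[OF det, of i] by blast
    define v where "v = X*A1 + Y*B1"
    have ft: "int (fibo t) = A1" using Suc A1_def fibo_def by simp
    have B1A1: "B1 \<le> A1" "0 \<le> B1" unfolding A1_def B1_def using fib_mono[of "k+1" "k+2"] by simp_all
    have hA: "\<bar>A1\<bar> = A1" "\<bar>B1\<bar> = B1" using B1A1 by auto
    have "real_of_int \<bar>v\<bar> \<le> (real_of_int A1 + real_of_int B1)/2" using XY(1) hA unfolding v_def by simp
    moreover have "real_of_int B1 \<le> real_of_int A1" using B1A1 by simp
    ultimately have "real_of_int \<bar>v\<bar> \<le> real_of_int A1" by (rule half_le)
    hence "\<bar>v\<bar> \<le> A1" by simp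
    hence vin: "v \<in> {- int (fibo t)..int (fibo t)}" using ft by auto
    define r where "r = X*A2 + Y*B2"
    define jj where "jj = i - r"
    have "i - (p*v + jj) = q * (- (X * B1 + Y * int (fib k)))"
      unfolding jj_def r_def v_def A2_def B2_def by (simp add: algebra_simps)
    hence "[i = p*v + jj] (mod q)" by (simp add: cong_iff_dvd_diff)
    hence le1: "lee q i (p*v) \<le> nat \<bar>jj\<bar>" by (rule lee_le)
    have absA2: "\<bar>A2\<bar> = int (fib (L-k))" using G(2) unfolding A2_def A1_def B1_def by (simp add: abs_mult)
    have absB2: "\<bar>B2\<bar> = int (fib (L+1-k))" using G(1) unfolding B2_def B1_def by (simp add: abs_mult)
    have fsum: "fib (L-k) + fib (L+1-k) = fib (L+2-k)" using kL
      by (metis Suc_diff_le add_2_eq_Suc' add_Suc_right fib.simps(3) le_SucI plus_1_eq_Suc add.commute Suc_eq_plus1 diff_Suc_Suc)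
    have "\<bar>real_of_int jj\<bar> \<le> real (fib (L+2-k)) / 2"
    proof -
      have "\<bar>real_of_int jj\<bar> = \<bar>real_of_int (X*A2 + Y*B2 - i)\<bar>" unfolding jj_def r_def by linarith
      also have "\<dots> \<le> (\<bar>A2\<bar>+\<bar>B2\<bar>)/2" by (rule XY(2))
      also have "\<dots> = real (fib (L+2-k)) / 2" using absA2 absB2 fsum
        by (metis of_int_add of_int_of_nat_eq of_nat_add)
      finally show ?thesis .
    qed
    hence le2: "real (lee q i (p*v)) \<le> real (fib (L+2-k)) / 2" using le1 by linarith
    have fb: "real (fib (L+2-k)) * real (fib (k+2)) \<le> 2 * real (fib (L+2))"
      using fibbound[OF kL(2)] by (metis of_nat_le_iff of_nat_mult of_nat_numeral)
    have fpos0: "fib (k+2) > 0" by (rule fib_neq_0_nat) simp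
    have fpos: "real (fib (k+2)) > 0" using fpos0 by (simp only: of_nat_0_less_iff)
    have "real (fib (L+2-k)) / 2 \<le> 3 * real (fib (L+2)) / real (fib (k+2))"
      using fb fpos by (simp add: field_simps)
    note prev = this
    have H: "real (lee q i (p*v)) \<le> 3 * real (fib (L+2)) / real (fib (k+2))" by (rule order_trans[OF le2 prev])
    have F: "real (fibo t) = real (fib (k+2))" "real (fibo (L+1)) = real (fib (L+2))"
      using Suc unfolding fibo_def by (simp_all only: Suc_eq_plus1 add_2_eq_Suc' add.commute)
    have "v \<in> {- int (fibo t)..int (fibo t)} \<and>
          real (lee (int (fibo (L+1))) i (int (fibo L) * v)) \<le> 3 * real (fibo (L+1)) / real (fibo t)"
      unfolding pq F using H vin by blast
    then show ?thesis by blast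
  qed
qed


theorem lemma56:
  shows "\<exists>c1 c2 :: real. c1 > 0 \<and> c2 > 0 \<and>
    (\<forall>L::nat. L \<ge> 1 \<longrightarrow>
      (\<forall>v v' :: int. v \<noteq> v' \<and>
          \<bar>real_of_int v\<bar> < c2 * real (fibo (L+1)) \<and>
          \<bar>real_of_int v'\<bar> < c2 * real (fibo (L+1)) \<longrightarrow>
          real (lee (int (fibo (L+1))) (int (fibo L) * v) (int (fibo L) * v'))
            > c1 * real (fibo (L+1)) / real_of_int (max \<bar>v\<bar> \<bar>v'\<bar>)))
    \<and> (\<forall>L::nat. L \<ge> 1 \<longrightarrow>
      (\<forall>(i::int) (t::nat). i \<in> {1..int (fibo (L+1))} \<and> t \<le> L \<longrightarrow>
        (\<exists>v::int. v \<in> {- int (fibo t)..int (fibo t)} \<and>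
          real (lee (int (fibo (L+1))) i (int (fibo L) * v))
            \<le> 3 * real (fibo (L+1)) / real (fibo t))))"
  apply (rule exI[of _ "1/12"], rule exI[of _ "1/4"])
  apply (intro conjI)
     apply simp
    apply simp
   apply (intro allI impI)
   apply (rule part1)
     apply auto[3]
  apply (intro allI impI)
  apply (rule part2)
     apply auto
  done

end
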